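(* Let $A$ be a $*$-ring with a set of local $*$-units. Then $A$ is von Neumann regular and a locally Rickart $*$-ring if and only if $A$ is von Neumann regular and proper. Likewise, if $A$ is a $\Gamma$-graded $*$-ring with a set of graded local $*$-units, then $A$ is graded von Neumann regular and a graded locally Rickart $*$-ring if and only if $A$ is graded von Neumann regular and graded proper.
   Context: Projection: $p=p^2=p^*$. Local $*$-units: for every finite $F\subseteq A$ a projection $u$ with $ux=xu=x$ for $x\in F$ (homogeneous $u$ in the graded case, where $A=\bigoplus_\gamma A_\gamma$ is $\Gamma$-graded with $A_\gamma^*\subseteq A_{-\gamma}$). Von Neumann regular: for each $x$ there is $y$ with $xyx=x$; graded von Neumann regular: for each homogeneous $x$ there is homogeneous $y$ with $xyx=x$. Rickart $*$-ring: right annihilator of every element generated by a projection; graded Rickart $*$-ring: right annihilator of every homogeneous element generated by a homogeneous projection. Locally (graded) Rickart $*$-ring: $pAp$ is a (graded) Rickart $*$-ring for every (homogeneous) projection $p$. Proper: $xx^*=0\Rightarrow x=0$; graded proper: the same for homogeneous $x$. *)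

theory Defs
  imports Main
begin

definition star_ring :: "('a::ring \<Rightarrow> 'a) \<Rightarrow> bool" where
  "star_ring star \<longleftrightarrow>
     (\<forall>x y. star (x + y) = star x + star y) \<and>
     (\<forall>x y. star (x * y) = star y * star x) \<and>
     (\<forall>x. star (star x) = x)"

definition projection :: "('a::ring \<Rightarrow> 'a) \<Rightarrow> 'a \<Rightarrow> bool" where
  "projection star p \<longleftrightarrow> p * p = p \<and> star p = p"

definition has_local_star_units :: "('a::ring \<Rightarrow> 'a) \<Rightarrow> bool" where
  "has_local_star_units star \<longleftrightarrow>
     (\<forall>F. finite F \<longrightarrow> (\<exists>u. projection star u \<and> (\<forall>x\<in>F. u * x = x \<and> x * u = x)))"

definition von_neumann_regular :: "'a::ring itself \<Rightarrow> bool" where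
  "von_neumann_regular _ \<longleftrightarrow> (\<forall>x::'a. \<exists>y. x * y * x = x)"

definition rickart_on :: "('a::ring \<Rightarrow> 'a) \<Rightarrow> 'a set \<Rightarrow> bool" where
  "rickart_on star S \<longleftrightarrow>
     (\<forall>x\<in>S. \<exists>q\<in>S. projection star q \<and> {y\<in>S. x * y = 0} = {q * y | y. y \<in> S})"

definition corner :: "'a::ring \<Rightarrow> 'a set" where
  "corner p = {p * x * p | x. True}"

definition rickart_star_ring :: "('a::ring \<Rightarrow> 'a) \<Rightarrow> bool" where
  "rickart_star_ring star \<longleftrightarrow> rickart_on star UNIV"

definition locally_rickart :: "('a::ring \<Rightarrow> 'a) \<Rightarrow> bool" where
  "locally_rickart star \<longleftrightarrow> (\<forall>p. projection star p \<longrightarrow> rickart_on star (corner p))"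

definition proper :: "('a::ring \<Rightarrow> 'a) \<Rightarrow> bool" where
  "proper star \<longleftrightarrow> (\<forall>x. x * star x = 0 \<longrightarrow> x = 0)"

text \<open>A \<Gamma>-graded *-ring: A is the internal direct sum of additive subgroups
  Agr \<gamma>, with Agr \<gamma> * Agr \<delta> \<subseteq> Agr (\<gamma>+\<delta>) and star (Agr \<gamma>) \<subseteq> Agr (-\<gamma>).\<close>
definition graded_star_ring :: "('a::ring \<Rightarrow> 'a) \<Rightarrow> ('g::ab_group_add \<Rightarrow> 'a set) \<Rightarrow> bool" where
  "graded_star_ring star Agr \<longleftrightarrow>
     star_ring star \<and>
     (\<forall>\<gamma>. 0 \<in> Agr \<gamma> \<and> (\<forall>x\<in>Agr \<gamma>. \<forall>y\<in>Agr \<gamma>. x + y \<in> Agr \<gamma> \<and> - x \<in> Agr \<gamma>)) \<and>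
     (\<forall>\<gamma> \<delta>. \<forall>x\<in>Agr \<gamma>. \<forall>y\<in>Agr \<delta>. x * y \<in> Agr (\<gamma> + \<delta>)) \<and>
     (\<forall>\<gamma>. \<forall>x\<in>Agr \<gamma>. star x \<in> Agr (- \<gamma>)) \<and>
     (\<forall>x. \<exists>!c::'g \<Rightarrow> 'a. finite {\<gamma>. c \<gamma> \<noteq> 0} \<and> (\<forall>\<gamma>. c \<gamma> \<in> Agr \<gamma>) \<and>
            x = sum c {\<gamma>. c \<gamma> \<noteq> 0})"

definition homogeneous :: "('g \<Rightarrow> 'a set) \<Rightarrow> 'a \<Rightarrow> bool" where
  "homogeneous Agr x \<longleftrightarrow> (\<exists>\<gamma>. x \<in> Agr \<gamma>)"

definition has_graded_local_star_units :: "('a::ring \<Rightarrow> 'a) \<Rightarrow> ('g \<Rightarrow> 'a set) \<Rightarrow> bool" where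
  "has_graded_local_star_units star Agr \<longleftrightarrow>
     (\<forall>F. finite F \<longrightarrow> (\<exists>u. homogeneous Agr u \<and> projection star u \<and>
                              (\<forall>x\<in>F. u * x = x \<and> x * u = x)))"

definition graded_von_neumann_regular :: "('g \<Rightarrow> 'a::ring set) \<Rightarrow> bool" where
  "graded_von_neumann_regular Agr \<longleftrightarrow>
     (\<forall>x. homogeneous Agr x \<longrightarrow> (\<exists>y. homogeneous Agr y \<and> x * y * x = x))"

definition graded_rickart_on :: "('a::ring \<Rightarrow> 'a) \<Rightarrow> 'a set \<Rightarrow> ('g \<Rightarrow> 'a set) \<Rightarrow> bool" where
  "graded_rickart_on star S Sgr \<longleftrightarrow>
     (\<forall>x. homogeneous Sgr x \<longrightarrow>
        (\<exists>q. homogeneous Sgr q \<and> projection star q \<and>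
             {y\<in>S. x * y = 0} = {q * y | y. y \<in> S}))"

definition corner_grading :: "('g \<Rightarrow> 'a::ring set) \<Rightarrow> 'a \<Rightarrow> 'g \<Rightarrow> 'a set" where
  "corner_grading Agr p \<gamma> = {p * x * p | x. x \<in> Agr \<gamma>}"

definition graded_locally_rickart :: "('a::ring \<Rightarrow> 'a) \<Rightarrow> ('g \<Rightarrow> 'a set) \<Rightarrow> bool" where
  "graded_locally_rickart star Agr \<longleftrightarrow>
     (\<forall>p. homogeneous Agr p \<and> projection star p \<longrightarrow>
          graded_rickart_on star (corner p) (corner_grading Agr p))"

definition graded_proper :: "('a::ring \<Rightarrow> 'a) \<Rightarrow> ('g \<Rightarrow> 'a set) \<Rightarrow> bool" where
  "graded_proper star Agr \<longleftrightarrow>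
     (\<forall>x. homogeneous Agr x \<longrightarrow> x * star x = 0 \<longrightarrow> x = 0)"

end

theory Submission
  imports Defs
begin

lemma sr_simps:
  assumes "star_ring star"
  shows "star (a * b) = star b * star a" "star (star a) = a" "star (a + b) = star a + star b"
    "star 0 = 0" "star (a - b) = star a - star b" "star (- a) = - star a"
proof -
  show sm: "star (a * b) = star b * star a" and ss: "star (star a) = a"
    and sa: "star (a + b) = star a + star b" using assms by (auto simp: star_ring_def)
  have a: "\<And>a b. star (a + b) = star a + star b" using assms by (auto simp: star_ring_def)
  have "star 0 = star 0 + star (0::'a)" using a[of 0 0] by simp
  then show z: "star 0 = 0" by simp
  have n: "\<And>a. star (- a) = - star a"
  proof -
    fix a :: 'a
    have "star a + star (- a) = 0" using a[of a "-a"] z by simp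
    then show "star (- a) = - star a" by (simp add: eq_neg_iff_add_eq_0 add.commute)
  qed
  show "star (a - b) = star a - star b" using a[of a "-b"] n[of b] by simp
  show "star (- a) = - star a" by (rule n)
qed

lemma selfadj_inv:
  assumes sr: "star_ring star" and h: "e * d0 * e = e" and se: "star e = e"
  shows "e * (d0 * e * star d0) * e = e" "star (d0 * e * star d0) = d0 * e * star d0"
proof -
  note s = sr_simps[OF sr]
  have "e * (d0 * e * star d0) * e = (e * d0 * e) * star d0 * e" by (simp add: mult.assoc)
  also have "\<dots> = e * star d0 * e" using h by simp
  also have "\<dots> = star (e * d0 * e)" using se by (simp add: s mult.assoc)
  also have "\<dots> = e" using h se by simp
  finally show "e * (d0 * e * star d0) * e = e" .
  show "star (d0 * e * star d0) = d0 * e * star d0" using se by (simp add: s mult.assoc)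
qed

lemma key1:
  assumes sr: "star_ring star"
    and inv: "x * star x * d * (x * star x) = x * star x" and sd: "star d = d"
    and pr: "star (star x * d * x * star x - star x) * star (star (star x * d * x * star x - star x)) = 0
      \<Longrightarrow> star (star x * d * x * star x - star x) = 0"
  shows "x * star x * d * x = x"
proof -
  note s = sr_simps[OF sr]
  define z where "z = star x * d * x * star x - star x"
  have xz: "x * z = 0" unfolding z_def using inv by (simp add: algebra_simps)
  have "star z * z = 0"
  proof -
    have "star z * z = (star z * star x) * d * x * star x - star z * star x"
      unfolding z_def by (simp add: algebra_simps)
    also have "star z * star x = star (x * z)" by (simp add: s)
    finally show ?thesis using xz s by simp
  qed
  then have "star z = 0" using pr unfolding z_def[symmetric] by (simp add: s)
  then have "z = 0" by (metis s(2) s(4))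
  then have "star x * d * x * star x = star x" unfolding z_def by simp
  then have "star (star x * d * x * star x) = star (star x)" by (rule arg_cong)
  then have "star (star x * d * x * star x) = x" by (simp only: s(2))
  then show ?thesis using sd by (simp add: s mult.assoc)
qed

lemma rick:
  assumes sr: "star_ring star" and pp: "projection star p" and xp: "x = p * x * p"
    and xd: "x * star x * d * x = x" and sd: "star d = d"
  shows "projection star (p - star x * d * x)" "p * (p - star x * d * x) * p = p - star x * d * x"
    "{y\<in>corner p. x * y = 0} = {(p - star x * d * x) * y | y. y \<in> corner p}"
proof -
  note s = sr_simps[OF sr]
  define g where "g = star x * d * x"
  have p2: "p * p = p" and ps: "star p = p" using pp by (auto simp: projection_def)
  have "p * x = p * (p * x * p)" using arg_cong[OF xp, of "(*) p"] .
  also have "\<dots> = p * x * p" by (simp add: p2 mult.assoc[symmetric])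
  finally have px: "p * x = x" using xp by simp
  have "x * p = (p * x * p) * p" using arg_cong[OF xp, of "\<lambda>t. t * p"] .
  also have "\<dots> = p * x * p" by (simp add: p2 mult.assoc)
  finally have xp1: "x * p = x" using xp by simp
  have sx1: "star x * p = star x" using px ps by (metis s(1))
  have sx2: "p * star x = star x" using xp1 ps by (metis s(1))
  have pg: "p * g = g" unfolding g_def using sx2 by (simp add: mult.assoc[symmetric])
  have gp2: "g * p = g" unfolding g_def using xp1 by (simp add: mult.assoc)
  have xg: "x * g = x" unfolding g_def using xd by (simp add: mult.assoc)
  have gg: "g * g = g" unfolding g_def using xd by (simp add: mult.assoc)
  have sg: "star g = g" unfolding g_def using sd by (simp add: s mult.assoc)
  show "projection star (p - star x * d * x)" unfolding g_def[symmetric] projection_def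
    using p2 pg gp2 gg ps sg by (simp add: algebra_simps s)
  show "p * (p - star x * d * x) * p = p - star x * d * x" unfolding g_def[symmetric]
    using p2 pg gp2 by (simp add: algebra_simps)
  show "{y\<in>corner p. x * y = 0} = {(p - star x * d * x) * y | y. y \<in> corner p}"
    unfolding g_def[symmetric]
  proof (intro equalityI subsetI)
    fix y assume "y \<in> {y\<in>corner p. x * y = 0}"
    then obtain w where y: "y = p * w * p" and xy: "x * y = 0" by (auto simp: corner_def)
    have py: "p * y = y" unfolding y by (simp add: p2 mult.assoc[symmetric])
    have gy: "g * y = 0" unfolding g_def using xy by (simp add: mult.assoc)
    have "(p - g) * y = y" using py gy by (simp add: algebra_simps)
    then show "y \<in> {(p - g) * y | y. y \<in> corner p}" using \<open>y \<in> _\<close> by force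
  next
    fix v assume "v \<in> {(p - g) * y | y. y \<in> corner p}"
    then obtain y w where v: "v = (p - g) * y" and y: "y = p * w * p" by (auto simp: corner_def)
    have pg': "\<And>t. p * (g * t) = g * t" using pg by (simp add: mult.assoc[symmetric])
    have gp': "\<And>t. g * (p * t) = g * t" using gp2 by (simp add: mult.assoc[symmetric])
    have pp': "\<And>t. p * (p * t) = p * t" using p2 by (simp add: mult.assoc[symmetric])
    have vv: "v = p * ((p - g) * w) * p" unfolding v y using pg p2 gp2
      by (simp add: algebra_simps pg' gp' pp')
    have "x * (p * y) = x * y" using xp1 by (simp add: mult.assoc[symmetric])
    moreover have "x * (g * y) = x * y" using xg by (simp add: mult.assoc[symmetric])
    ultimately have xv: "x * v = 0" unfolding v by (simp add: algebra_simps)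
    show "v \<in> {y\<in>corner p. x * y = 0}" using xv vv by (auto simp: corner_def)
  qed
qed

lemma proper_from:
  assumes sr: "star_ring star" and q: "projection star q" and h1: "q * star x = star x" and h2: "x * q = 0"
  shows "x = 0"
proof -
  note s = sr_simps[OF sr]
  have "x = star (star x)" by (simp add: s)
  also have "\<dots> = star (q * star x)" using h1 by simp
  also have "\<dots> = x * star q" by (simp add: s)
  also have "\<dots> = x * q" using q by (simp add: projection_def)
  finally show ?thesis using h2 by simp
qed

lemma ann_facts:
  assumes q: "projection star q" and qS: "q \<in> S" and sxS: "star x \<in> S" and xsx: "x * star x = 0"
    and eq: "{y\<in>S. x * y = 0} = {q * y | y. y \<in> S}"
  shows "q * star x = star x" "x * q = 0"
proof -
  have "star x \<in> {q * y | y. y \<in> S}" using eq sxS xsx by blast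
  then obtain y where y: "star x = q * y" by blast
  have qq: "q * q = q" using q by (simp add: projection_def)
  show "q * star x = star x" unfolding y by (simp add: mult.assoc[symmetric] qq)
  have "q \<in> {q * y | y. y \<in> S}" using qS qq by (simp only: mem_Collect_eq) (rule exI[of _ q], simp)
  then show "x * q = 0" using eq by blast
qed

lemma ex1_eq: "\<exists>!x. P x \<Longrightarrow> P a \<Longrightarrow> P b \<Longrightarrow> a = b" by blast

lemma gfacts:
  fixes star :: "'a::ring \<Rightarrow> 'a" and Agr :: "'g::ab_group_add \<Rightarrow> 'a set"
  assumes g: "graded_star_ring star Agr"
  shows "star_ring star"
    "\<And>c. 0 \<in> Agr c"
    "\<And>x y c. x \<in> Agr c \<Longrightarrow> y \<in> Agr c \<Longrightarrow> x + y \<in> Agr c"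
    "\<And>x c. x \<in> Agr c \<Longrightarrow> - x \<in> Agr c"
    "\<And>x y a b. x \<in> Agr a \<Longrightarrow> y \<in> Agr b \<Longrightarrow> x * y \<in> Agr (a + b)"
    "\<And>x a. x \<in> Agr a \<Longrightarrow> star x \<in> Agr (- a)"
    "\<And>x. \<exists>!c::'g \<Rightarrow> 'a. finite {\<gamma>. c \<gamma> \<noteq> 0} \<and> (\<forall>\<gamma>. c \<gamma> \<in> Agr \<gamma>) \<and>
            x = sum c {\<gamma>. c \<gamma> \<noteq> 0}"
proof -
  have A: "star_ring star" and B: "\<forall>\<gamma>. 0 \<in> Agr \<gamma> \<and> (\<forall>x\<in>Agr \<gamma>. \<forall>y\<in>Agr \<gamma>. x + y \<in> Agr \<gamma> \<and> - x \<in> Agr \<gamma>)"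
   and C: "\<forall>\<gamma> \<delta>. \<forall>x\<in>Agr \<gamma>. \<forall>y\<in>Agr \<delta>. x * y \<in> Agr (\<gamma> + \<delta>)"
   and D: "\<forall>\<gamma>. \<forall>x\<in>Agr \<gamma>. star x \<in> Agr (- \<gamma>)"
   and E: "\<forall>x. \<exists>!c::'g \<Rightarrow> 'a. finite {\<gamma>. c \<gamma> \<noteq> 0} \<and> (\<forall>\<gamma>. c \<gamma> \<in> Agr \<gamma>) \<and>
            x = sum c {\<gamma>. c \<gamma> \<noteq> 0}"
    using g unfolding graded_star_ring_def
    by (rule conjunct1, rule conjunct1[OF conjunct2], rule conjunct1[OF conjunct2[OF conjunct2]],
        rule conjunct1[OF conjunct2[OF conjunct2[OF conjunct2]]], rule conjunct2[OF conjunct2[OF conjunct2[OF conjunct2]]])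
  show "star_ring star" by (rule A)
  show "\<And>c. 0 \<in> Agr c" using B by simp
  show "\<And>x y c. x \<in> Agr c \<Longrightarrow> y \<in> Agr c \<Longrightarrow> x + y \<in> Agr c" using B by simp
  show "\<And>x c. x \<in> Agr c \<Longrightarrow> - x \<in> Agr c" using B by simp
  show "\<And>x y a b. x \<in> Agr a \<Longrightarrow> y \<in> Agr b \<Longrightarrow> x * y \<in> Agr (a + b)" using C by simp
  show "\<And>x a. x \<in> Agr a \<Longrightarrow> star x \<in> Agr (- a)" using D by simp
  show "\<And>x. \<exists>!c::'g \<Rightarrow> 'a. finite {\<gamma>. c \<gamma> \<noteq> 0} \<and> (\<forall>\<gamma>. c \<gamma> \<in> Agr \<gamma>) \<and>
            x = sum c {\<gamma>. c \<gamma> \<noteq> 0}" using E by (rule spec)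
qed

lemma hom_unique:
  assumes g: "graded_star_ring star Agr" and a: "p \<in> Agr a" and b: "p \<in> Agr b" and ab: "a \<noteq> b"
  shows "p = 0"
proof (rule ccontr)
  assume p0: "p \<noteq> 0"
  note gf = gfacts[OF g]
  have z: "\<And>c. 0 \<in> Agr c" by (rule gf(2))
  have ex: "\<exists>!c. finite {\<gamma>. c \<gamma> \<noteq> 0} \<and> (\<forall>\<gamma>. c \<gamma> \<in> Agr \<gamma>) \<and> p = sum c {\<gamma>. c \<gamma> \<noteq> 0}"
    by (rule gf(7))
  define c1 where "c1 = (\<lambda>\<gamma>. if \<gamma> = a then p else 0)"
  define c2 where "c2 = (\<lambda>\<gamma>. if \<gamma> = b then p else 0)"
  have s1: "{\<gamma>. c1 \<gamma> \<noteq> 0} = {a}" using p0 by (auto simp: c1_def)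
  have s2: "{\<gamma>. c2 \<gamma> \<noteq> 0} = {b}" using p0 by (auto simp: c2_def)
  have P1: "finite {\<gamma>. c1 \<gamma> \<noteq> 0} \<and> (\<forall>\<gamma>. c1 \<gamma> \<in> Agr \<gamma>) \<and> p = sum c1 {\<gamma>. c1 \<gamma> \<noteq> 0}"
    unfolding s1 using a z by (simp add: c1_def)
  have P2: "finite {\<gamma>. c2 \<gamma> \<noteq> 0} \<and> (\<forall>\<gamma>. c2 \<gamma> \<in> Agr \<gamma>) \<and> p = sum c2 {\<gamma>. c2 \<gamma> \<noteq> 0}"
    unfolding s2 using b z by (simp add: c2_def)
  have "c1 = c2" by (rule ex1_eq[where P="\<lambda>c. finite {\<gamma>. c \<gamma> \<noteq> 0} \<and> (\<forall>\<gamma>. c \<gamma> \<in> Agr \<gamma>) \<and> p = sum c {\<gamma>. c \<gamma> \<noteq> 0}", OF ex P1 P2])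
  then have "c1 a = c2 a" by simp
  then show False using ab p0 by (simp add: c1_def c2_def)
qed

lemma mdeg:
  assumes g: "graded_star_ring star Agr" and "x \<in> Agr a" "y \<in> Agr b" "a + b = c"
  shows "x * y \<in> Agr c"
  using gfacts(5)[OF g, of x a y b] assms by simp

lemma sdeg:
  assumes g: "graded_star_ring star Agr" and "x \<in> Agr a" "- a = c"
  shows "star x \<in> Agr c"
  using gfacts(6)[OF g, of x a] assms by simp

lemma ddeg:
  assumes g: "graded_star_ring star Agr" and x: "x \<in> Agr a" and y: "y \<in> Agr a"
  shows "x - y \<in> Agr a"
proof -
  have "- y \<in> Agr a" using gfacts(4)[OF g y] .
  then have "x + - y \<in> Agr a" using gfacts(3)[OF g x] by blast
  then show ?thesis by simp
qed

lemma proj_deg0: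
  assumes g: "graded_star_ring star Agr" and p: "p \<in> Agr a" and pp: "projection star p"
  shows "p \<in> Agr 0"
proof (cases "a = 0")
  case True then show ?thesis using p by simp
next
  case False
  have "p * p \<in> Agr (a + a)" using mdeg[OF g p p] by simp
  then have "p \<in> Agr (a + a)" using pp by (simp add: projection_def)
  moreover have "a \<noteq> a + a" using False by simp
  ultimately have "p = 0" using hom_unique[OF g p] by blast
  then show ?thesis using gfacts(2)[OF g] by simp
qed

lemma ung_fwd:
  assumes sr: "star_ring star" and lu: "has_local_star_units star" and lr: "locally_rickart star"
  shows "proper star"
  unfolding proper_def
proof (intro allI impI)
  fix x assume xx: "x * star x = 0"
  obtain u where u: "projection star u" and uF: "\<forall>y\<in>{x, star x}. u * y = y \<and> y * u = y"
    using lu[unfolded has_local_star_units_def, rule_format, of "{x, star x}"] by auto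
  have ux: "x = u * x * u" and usx: "star x = u * star x * u" using uF by auto
  have xc: "x \<in> corner u" unfolding corner_def using ux by blast
  have sxc: "star x \<in> corner u" unfolding corner_def using usx by blast
  have "rickart_on star (corner u)" using lr u by (simp add: locally_rickart_def)
  then obtain q where q: "q \<in> corner u" "projection star q"
    and eq: "{y\<in>corner u. x * y = 0} = {q * y | y. y \<in> corner u}"
    using xc unfolding rickart_on_def by blast
  show "x = 0" using proper_from[OF sr q(2) ann_facts[OF q(2) q(1) sxc xx eq]] .
qed

lemma ung_bwd:
  assumes sr: "star_ring star" and vn: "von_neumann_regular TYPE('a::ring)" and pr: "proper (star :: 'a \<Rightarrow> 'a)"
  shows "locally_rickart star"
  unfolding locally_rickart_def rickart_on_def
proof (intro allI impI ballI)
  note s = sr_simps[OF sr]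
  fix p x :: 'a assume pp: "projection star p" and xc: "x \<in> corner p"
  then obtain w where xw: "x = p * w * p" by (auto simp: corner_def)
  have pp2: "p * p = p" using pp by (simp add: projection_def)
  have xp: "x = p * x * p" unfolding xw by (simp add: mult.assoc[symmetric] pp2) (simp add: mult.assoc pp2)
  obtain d0 where d0: "x * star x * d0 * (x * star x) = x * star x"
    using vn unfolding von_neumann_regular_def by blast
  have se: "star (x * star x) = x * star x" by (simp add: s)
  note si = selfadj_inv[OF sr d0 se]
  define d where "d = d0 * (x * star x) * star d0"
  have inv: "x * star x * d * (x * star x) = x * star x" using si(1) unfolding d_def by (simp add: mult.assoc)
  have sd: "star d = d" using si(2) unfolding d_def .
  have xd: "x * star x * d * x = x"
    by (rule key1[OF sr inv sd], rule pr[unfolded proper_def, rule_format])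
  note r = rick[OF sr pp xp xd sd]
  show "\<exists>q\<in>corner p. projection star q \<and> {y \<in> corner p. x * y = 0} = {q * y |y. y \<in> corner p}"
  proof (intro bexI conjI)
    show "p - star x * d * x \<in> corner p" unfolding corner_def
      by (rule CollectI, rule exI[of _ "p - star x * d * x"]) (use r(2) in simp)
  qed (rule r(1), rule r(3))
qed

lemma gr_fwd:
  fixes star :: "'a::ring \<Rightarrow> 'a" and Agr :: "'g::ab_group_add \<Rightarrow> 'a set"
  assumes g: "graded_star_ring star Agr" and lu: "has_graded_local_star_units star Agr"
    and lr: "graded_locally_rickart star Agr"
  shows "graded_proper star Agr"
  unfolding graded_proper_def
proof (intro allI impI)
  have sr: "star_ring star" by (rule gfacts(1)[OF g])
  fix x assume hx: "homogeneous Agr x" and xx: "x * star x = 0"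
  obtain u where hu: "homogeneous Agr u" and u: "projection star u" and uF: "\<forall>y\<in>{x, star x}. u * y = y \<and> y * u = y"
    using lu[unfolded has_graded_local_star_units_def, rule_format, of "{x, star x}"] by auto
  have ux: "x = u * x * u" and usx: "star x = u * star x * u" using uF by auto
  obtain \<gamma> where xg: "x \<in> Agr \<gamma>" using hx by (auto simp: homogeneous_def)
  have hxc: "homogeneous (corner_grading Agr u) x" unfolding homogeneous_def corner_grading_def
    using ux xg by blast
  have sxc: "star x \<in> corner u" unfolding corner_def using usx by blast
  have "graded_rickart_on star (corner u) (corner_grading Agr u)" using lr u hu by (simp add: graded_locally_rickart_def)
  then obtain q where hq: "homogeneous (corner_grading Agr u) q" and q: "projection star q"
    and eq: "{y\<in>corner u. x * y = 0} = {q * y | y. y \<in> corner u}"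
    using hxc unfolding graded_rickart_on_def by blast
  have qc: "q \<in> corner u" using hq unfolding homogeneous_def corner_grading_def corner_def by blast
  show "x = 0" using proper_from[OF sr q ann_facts[OF q qc sxc xx eq]] .
qed

lemma gr_bwd:
  fixes star :: "'a::ring \<Rightarrow> 'a" and Agr :: "'g::ab_group_add \<Rightarrow> 'a set"
  assumes g: "graded_star_ring star Agr" and vn: "graded_von_neumann_regular Agr"
    and pr: "graded_proper star Agr"
  shows "graded_locally_rickart star Agr"
  unfolding graded_locally_rickart_def graded_rickart_on_def
proof (intro allI impI)
  have sr: "star_ring star" by (rule gfacts(1)[OF g])
  note s = sr_simps[OF sr]
  fix p x assume php: "homogeneous Agr p \<and> projection star p" and hx: "homogeneous (corner_grading Agr p) x"
  then have pp: "projection star p" and hp: "homogeneous Agr p" by auto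
  obtain \<delta> where pd: "p \<in> Agr \<delta>" using hp by (auto simp: homogeneous_def)
  have p0: "p \<in> Agr 0" by (rule proj_deg0[OF g pd pp])
  obtain w \<gamma> where xw: "x = p * w * p" and wg: "w \<in> Agr \<gamma>"
    using hx by (auto simp: homogeneous_def corner_grading_def)
  have pp2: "p * p = p" using pp by (simp add: projection_def)
  have xp: "x = p * x * p" unfolding xw by (simp add: mult.assoc[symmetric] pp2) (simp add: mult.assoc pp2)
  have b1: "p * w \<in> Agr \<gamma>" by (rule mdeg[OF g p0 wg]) simp
  have xa: "x \<in> Agr \<gamma>" unfolding xw by (rule mdeg[OF g b1 p0]) simp
  have sxa: "star x \<in> Agr (- \<gamma>)" by (rule sdeg[OF g xa]) simp
  have ea: "x * star x \<in> Agr 0" by (rule mdeg[OF g xa sxa]) simp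
  obtain d0 where hd0: "homogeneous Agr d0" and d0': "x * star x * d0 * (x * star x) = x * star x"
    using vn ea unfolding graded_von_neumann_regular_def homogeneous_def by blast
  obtain \<epsilon> where d0a: "d0 \<in> Agr \<epsilon>" using hd0 by (auto simp: homogeneous_def)
  have se: "star (x * star x) = x * star x" by (simp add: s)
  note si = selfadj_inv[OF sr d0' se]
  define d where "d = d0 * (x * star x) * star d0"
  have a1: "d0 * (x * star x) \<in> Agr \<epsilon>" by (rule mdeg[OF g d0a ea]) simp
  have a2: "star d0 \<in> Agr (- \<epsilon>)" by (rule sdeg[OF g d0a]) simp
  have da: "d \<in> Agr 0" unfolding d_def by (rule mdeg[OF g a1 a2]) simp
  have inv: "x * star x * d * (x * star x) = x * star x" using si(1) unfolding d_def by (simp add: mult.assoc)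
  have sd: "star d = d" using si(2) unfolding d_def .
  have c1: "star x * d \<in> Agr (- \<gamma>)" by (rule mdeg[OF g sxa da]) simp
  have ga: "star x * d * x \<in> Agr 0" by (rule mdeg[OF g c1 xa]) simp
  have c3: "star x * d * x * star x \<in> Agr (- \<gamma>)" by (rule mdeg[OF g ga sxa]) simp
  have za: "star x * d * x * star x - star x \<in> Agr (- \<gamma>)" by (rule ddeg[OF g c3 sxa])
  have hz: "homogeneous Agr (star (star x * d * x * star x - star x))"
    unfolding homogeneous_def using sdeg[OF g za] by blast
  have xd: "x * star x * d * x = x"
    by (rule key1[OF sr inv sd], rule pr[unfolded graded_proper_def, rule_format, OF hz])
  note r = rick[OF sr pp xp xd sd]
  have qa: "p - star x * d * x \<in> Agr 0" by (rule ddeg[OF g p0 ga])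
  show "\<exists>q. homogeneous (corner_grading Agr p) q \<and> projection star q \<and>
          {y \<in> corner p. x * y = 0} = {q * y |y. y \<in> corner p}"
  proof (intro exI conjI)
    show "homogeneous (corner_grading Agr p) (p - star x * d * x)"
      unfolding homogeneous_def corner_grading_def
      by (rule exI[of _ 0], rule CollectI, rule exI[of _ "p - star x * d * x"]) (use r(2) qa in simp)
  qed (rule r(1), rule r(3))
qed

theorem mainTheorem9:
  fixes star :: "'a::ring \<Rightarrow> 'a" and Agr :: "'g::ab_group_add \<Rightarrow> 'a set"
  shows "(star_ring star \<and> has_local_star_units star \<longrightarrow>
           ((von_neumann_regular TYPE('a) \<and> locally_rickart star) \<longleftrightarrow>
            (von_neumann_regular TYPE('a) \<and> proper star))) \<and>
         (graded_star_ring star Agr \<and> has_graded_local_star_units star Agr \<longrightarrow>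
           ((graded_von_neumann_regular Agr \<and> graded_locally_rickart star Agr) \<longleftrightarrow>
            (graded_von_neumann_regular Agr \<and> graded_proper star Agr)))"
proof (intro conjI impI)
  assume "star_ring star \<and> has_local_star_units star"
  then show "(von_neumann_regular TYPE('a) \<and> locally_rickart star) \<longleftrightarrow>
            (von_neumann_regular TYPE('a) \<and> proper star)"
    using ung_fwd[of star] ung_bwd[of star] by blast
next
  assume "graded_star_ring star Agr \<and> has_graded_local_star_units star Agr"
  then show "(graded_von_neumann_regular Agr \<and> graded_locally_rickart star Agr) \<longleftrightarrow>
            (graded_von_neumann_regular Agr \<and> graded_proper star Agr)"
    using gr_fwd[of star Agr] gr_bwd[of star Agr] by blast
qed

end
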